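(* Let $\beta,\theta,\gamma>0$ and let $\mathcal{L}$ and $(M_t)$ be as in the context. There exists a function $\psi:\mathbb{N}_+\to(0,\infty)$ with $0<\inf_{\mathbb{N}_+}\psi<\sup_{\mathbb{N}_+}\psi\le1$ such that for every $V\in\mathcal{S}\cup\{[x^p]:p\ge1\}$: (i) there exist real constants $a<b$, $\xi$ and $\zeta>0$ such that $$\mathcal{L}V\le aV+\zeta\psi,\qquad b\psi\le\mathcal{L}\psi\le\xi\psi\quad\text{pointwise on }\mathbb{N}_+;$$ (ii) for $R$ large enough, the set $K=\{x\in\mathbb{N}_+:\psi(x)\ge V(x)/R\}$ is non-empty and finite, and for all $x,y\in K$ and $t_0>0$, $M_{t_0}(x,y)>0$.
   Context: $\mathcal{L}$ acts on functions $f:\mathbb{N}_+\to\mathbb{R}$ by $$\mathcal{L}f(n)=\beta n(f(n+1)-f(n))-\theta nf(n)+\sum_{j=1}^{n-1}\frac{\gamma n}{j(j+1)}\big(f(j)+f(n-j)-f(n)\big).$$ It is the generator of the first moment semigroup $M_tf(n)=\mathbb{E}_{\delta_n}[\sum_{\mathcal{C}}f(|\mathcal{C}|)]$ (sum over active clusters at time $t$) of the GFI process with parameters $\beta,\theta,\gamma$, started from one active cluster which is a uniform random recursive tree of size $n$; in this process each active cluster of size $n$ independently becomes inactive at rate $\theta n$, grows to size $n+1$ at rate $\beta n$, and splits into clusters of sizes $n-j$ and $j$ at rate $\gamma n/(j(j+1))$. $M_t(n,m)=M_t\mathbf{1}_m(n)$ is the mean number of active clusters of size $m$ at time $t$. $[x^p](n)=n^p$.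 $\mathcal{S}$ is the set of functions $f:\mathbb{N}_+\to[1,\infty)$ that are increasing with $\lim_{n\to\infty}f(n)=\infty$, satisfy $f(n+1)/(n+1)\le f(n)/n$ for all $n$, and $\sum_{j\ge1}f(j)/(j(j+1))<\infty$. *)

theory Defs
  imports "HOL-Analysis.Analysis"
begin

text \<open>Functions on the positive integers are modelled as nat => real; values at 0 are irrelevant.\<close>

definition genL :: "real \<Rightarrow> real \<Rightarrow> real \<Rightarrow> (nat \<Rightarrow> real) \<Rightarrow> nat \<Rightarrow> real" where
  "genL \<beta> \<theta> \<gamma> f n =
     \<beta> * real n * (f (n+1) - f n) - \<theta> * real n * f n
     + (\<Sum>j=1..n-1. \<gamma> * real n / (real j * (real j + 1)) * (f j + f (n-j) - f n))"

definition Lker :: "real \<Rightarrow> real \<Rightarrow> real \<Rightarrow> nat \<Rightarrow> nat \<Rightarrow> real" where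
  "Lker \<beta> \<theta> \<gamma> n l = genL \<beta> \<theta> \<gamma> (\<lambda>k. if k = l then 1 else 0) n"

text \<open>Feller's iteration for the minimal nonnegative solution of the backward
  Kolmogorov equation associated to the (finite-range-per-row) kernel Lker.
  From state n only the states 1..n+1 are reachable in one jump.\<close>
primrec Mit :: "real \<Rightarrow> real \<Rightarrow> real \<Rightarrow> nat \<Rightarrow> real \<Rightarrow> nat \<Rightarrow> nat \<Rightarrow> ennreal" where
  "Mit \<beta> \<theta> \<gamma> 0 t n m =
     (if n = m then ennreal (exp (Lker \<beta> \<theta> \<gamma> n n * t)) else 0)"
| "Mit \<beta> \<theta> \<gamma> (Suc k) t n m =
     (if n = m then ennreal (exp (Lker \<beta> \<theta> \<gamma> n n * t)) else 0)
     + (\<integral>\<^sup>+ s\<in>{0..t}. ennreal (exp (Lker \<beta> \<theta> \<gamma> n n * s))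
          * (\<Sum>l\<in>{1..n+1}-{n}. ennreal (Lker \<beta> \<theta> \<gamma> n l) * Mit \<beta> \<theta> \<gamma> k (t - s) l m) \<partial>lborel)"

text \<open>M_t(n,m): mean number of active clusters of size m at time t, started from one
  cluster of size n (minimal solution of the backward equation).\<close>
definition Mt :: "real \<Rightarrow> real \<Rightarrow> real \<Rightarrow> real \<Rightarrow> nat \<Rightarrow> nat \<Rightarrow> ennreal" where
  "Mt \<beta> \<theta> \<gamma> t n m = (SUP k. Mit \<beta> \<theta> \<gamma> k t n m)"

definition classS :: "(nat \<Rightarrow> real) set" where
  "classS = {f. (\<forall>n\<ge>1. 1 \<le> f n) \<and> (\<forall>n\<ge>1. f n \<le> f (n+1))
              \<and> filterlim f at_top sequentially
              \<and> (\<forall>n\<ge>1. f (n+1) / real (n+1) \<le> f n / real n)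
              \<and> summable (\<lambda>j. f (j+1) / (real (j+1) * real (j+2)))}"

end

theory Submission
  imports Defs
begin

lemma frac_aux: "(u::real) \<noteq> 0 \<Longrightarrow> v \<noteq> 0 \<Longrightarrow> 1 / u - 1 / (u * v) = (v - 1) / (u * v)"
  by (simp add: field_simps)

lemma frac_aux2: "(u::real) \<noteq> 0 \<Longrightarrow> u / (u * v) = 1 / v"
  by simp

lemma a1: "(c::real) / q * (x + y - A) = c * (A * (1/q) + (x - A) * (1/q) + (y - A) * (1/q))"
proof -
  have "A * (1/q) + (x - A) * (1/q) + (y - A) * (1/q) = (A + (x - A) + (y - A)) * (1/q)" by (simp only: distrib_right[symmetric])
  also have "\<dots> = (x + y - A) * (1/q)" by simp
  finally show ?thesis by simp
qed

lemma gL_alg: "(x::real) \<noteq> 0 \<Longrightarrow> g*A - t*A + g*D = 0 \<Longrightarrow> - t * x * A + g * x * (A * (1 - 1 / x) + D + E) = - g * A + g * x * E"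
proof -
  assume x: "x \<noteq> 0" and D: "g*A - t*A + g*D = 0"
  have a: "x * (1 - 1/x) = x - 1" using x by (simp add: right_diff_distrib)
  have "g * x * (A * (1 - 1 / x) + D + E) = g*A*(x * (1 - 1/x)) + g*x*D + g*x*E" by (simp add: algebra_simps)
  also have "\<dots> = g*A*(x - 1) + g*x*D + g*x*E" by (simp only: a)
  finally have b: "g * x * (A * (1 - 1 / x) + D + E) = g*A*(x - 1) + g*x*D + g*x*E" .
  have c: "x * (g*A - t*A + g*D) = 0" using D by simp
  show ?thesis unfolding b using c by (simp add: algebra_simps)
qed

lemma abs_aux: "(g::real) \<ge> 0 \<Longrightarrow> x \<ge> 0 \<Longrightarrow> \<bar>- g * A + g * x * E\<bar> \<le> g * \<bar>A\<bar> + g * (x * \<bar>E\<bar>)"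
proof -
  assume g: "g \<ge> 0" and x: "x \<ge> 0"
  have "\<bar>- g * A + g * x * E\<bar> \<le> \<bar>- g * A\<bar> + \<bar>g * x * E\<bar>" by (rule abs_triangle_ineq)
  also have "\<dots> = g * \<bar>A\<bar> + g * (x * \<bar>E\<bar>)" using g x by (simp add: abs_mult)
  finally show ?thesis .
qed

lemma canc_alg: "(x::real) > 0 \<Longrightarrow> g > 0 \<Longrightarrow> g * ((th - g) * (x+1) / (g*x) * (1 - 1/(x+1))) = th - g"
proof -
  assume x: "x > 0" and g: "g > 0"
  have x1: "x + 1 \<noteq> 0" "x \<noteq> 0" "g \<noteq> 0" using x g by auto
  have "1 - 1/(x+1) = x/(x+1)" using x by (simp add: field_simps)
  then have "g * ((th - g) * (x+1) / (g*x) * (1 - 1/(x+1))) = g * ((th - g) * (x+1) / (g*x) * (x/(x+1)))" by simp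
  also have "(th - g) * (x+1) / (g*x) * (x/(x+1)) = ((th - g) * ((x+1) * x)) / (g * ((x+1) * x))"
    by (simp add: ac_simps)
  also have "\<dots> = (th - g) / g" using x1 by (rule_tac mult_divide_mult_cancel_right) simp
  also have "g * ((th - g) / g) = th - g" using x1 by simp
  finally show ?thesis .
qed

lemma tele:
  fixes a b :: nat
  assumes "1 \<le> a" "a \<le> b + 1"
  shows "(\<Sum>j=a..b. 1 / (real j * (real j + 1))) = 1 / real a - 1 / (real b + 1)"
  using assms(2)
proof (induction b)
  case 0
  then show ?case using assms(1) by auto
next
  case (Suc b)
  show ?case
  proof (cases "a = Suc b + 1")
    case True
    then show ?thesis by simp
  next
    case False
    then have "a \<le> b + 1" using Suc.prems by simp
    then have "(\<Sum>j=a..Suc b. 1 / (real j * (real j + 1))) =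
       1 / real a - 1 / (real b + 1) + 1 / (real (Suc b) * (real (Suc b) + 1))"
      using Suc.IH by (simp add: sum.cl_ivl_Suc)
    also have "\<dots> = 1 / real a - 1 / (real (Suc b) + 1)"
    proof -
      have p1: "real b + 1 > 0" "real b + 2 > 0" by auto
      have "1/(real b+1) - 1/((real b+1)*(real b+2)) = ((real b+2) - 1)/((real b+1)*(real b+2))"
        using p1 frac_aux[of "real b + 1" "real b + 2"] by simp
      also have "\<dots> = 1/(real b+2)" using p1 frac_aux2[of "real b + 1" "real b + 2"] by (simp add: add.commute)
      finally have "1/(real b+1) - 1/((real b+1)*(real b+2)) = 1/(real b+2)" .
      then show ?thesis by (simp add: add.commute)
    qed
    finally show ?thesis .
  qed
qed

lemma ev_bounded:
  fixes h :: "nat \<Rightarrow> real"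
  assumes "eventually (\<lambda>n. h n \<le> C) sequentially"
  shows "\<exists>Z. \<forall>n. h n \<le> Z"
proof -
  obtain N where N: "\<And>n. n \<ge> N \<Longrightarrow> h n \<le> C" using assms by (auto simp: eventually_sequentially)
  have "h n \<le> max C (\<Sum>m<N. \<bar>h m\<bar>)" for n
  proof (cases "n < N")
    case True
    have "h n \<le> \<bar>h n\<bar>" by simp
    also have "\<dots> \<le> (\<Sum>m<N. \<bar>h m\<bar>)" by (rule member_le_sum) (use True in auto)
    finally show ?thesis by simp
  next
    case False then have "h n \<le> C" using N by simp
    then show ?thesis by simp
  qed
  then show ?thesis by blast
qed

lemma superadd:
  fixes x y p :: real
  assumes "0 \<le> x" "0 \<le> y" "1 \<le> p"
  shows "x powr p + y powr p \<le> (x + y) powr p"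
proof (cases "x + y = 0")
  case True then have "x = 0" "y = 0" using assms by auto
  then show ?thesis using assms by simp
next
  case False
  define s where "s = x + y"
  have s: "s > 0" using False assms s_def by simp
  have k: "u powr p \<le> u" if "0 \<le> u" "u \<le> 1" for u
    using powr_mono'[of 1 p u] that assms by simp
  have "x powr p = s powr p * (x / s) powr p" using s assms by (simp add: powr_divide)
  also have "\<dots> \<le> s powr p * (x / s)" using k[of "x/s"] s assms s_def by (intro mult_left_mono) auto
  finally have 1: "x powr p \<le> s powr p * (x / s)" .
  have "y powr p = s powr p * (y / s) powr p" using s assms by (simp add: powr_divide)
  also have "\<dots> \<le> s powr p * (y / s)" using k[of "y/s"] s assms s_def by (intro mult_left_mono) auto
  finally have 2: "y powr p \<le> s powr p * (y / s)" .
  have "s powr p * (x / s) + s powr p * (y / s) = s powr p * ((x + y) / s)" by (simp add: add_divide_distrib ring_distribs)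
  also have "\<dots> = s powr p" using s s_def by simp
  finally have "s powr p * (x / s) + s powr p * (y / s) = s powr p" .
  then have "x powr p + y powr p \<le> s powr p" using 1 2 by linarith
  then show ?thesis by (simp add: s_def)
qed

lemma Lker_up:
  assumes "1 \<le> n"
  shows "Lker \<beta> \<theta> \<gamma> n (n+1) = \<beta> * real n"
proof -
  have "(\<Sum>j=1..n-1. \<gamma> * real n / (real j * (real j + 1)) *
      ((if j = n+1 then 1 else 0) + (if n - j = n+1 then 1 else 0) - (if n = n+1 then 1 else 0))) = (0::real)"
    by (rule sum.neutral) auto
  then show ?thesis unfolding Lker_def genL_def by simp
qed

lemma Lker_down:
  assumes "\<gamma> > 0" "1 \<le> l" "l < n"
  shows "Lker \<beta> \<theta> \<gamma> n l > 0"
proof -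
  define F where "F j = \<gamma> * real n / (real j * (real j + 1)) *
      ((if j = l then 1 else 0) + (if n - j = l then 1 else 0) - (if n = l then 1 else 0))" for j
  have "0 < F l" unfolding F_def using assms by (auto intro!: mult_pos_pos add_pos_nonneg)
  also have "F l \<le> (\<Sum>j=1..n-1. F j)"
    by (rule member_le_sum) (use assms in \<open>auto simp: F_def\<close>)
  finally have "0 < (\<Sum>j=1..n-1. F j)" .
  then show ?thesis using assms unfolding Lker_def genL_def F_def by simp
qed

lemma Lker_pos:
  assumes "\<beta> > 0" "\<gamma> > 0" "1 \<le> n" "l \<in> {1..n+1} - {n}"
  shows "Lker \<beta> \<theta> \<gamma> n l > 0"
proof (cases "l = n + 1")
  case True then show ?thesis using Lker_up[OF assms(3)] assms by simp
next
  case False then show ?thesis using Lker_down[of \<gamma> l n \<beta> \<theta>] assms by auto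
qed

lemma exp_lb:
  fixes a s T :: real
  assumes "0 \<le> s" "s \<le> T"
  shows "exp (- \<bar>a\<bar> * T) \<le> exp (a * s)"
proof -
  have "- \<bar>a\<bar> * T \<le> - \<bar>a\<bar> * s" using assms mult_left_mono[of s T "\<bar>a\<bar>"] by simp
  also have "\<dots> \<le> a * s" using assms by (smt (verit) abs_ge_self abs_mult abs_of_nonneg mult_minus_left abs_le_iff)
  finally show ?thesis by simp
qed

lemma Mit_pos:
  assumes "\<beta> > 0" "\<gamma> > 0"
  shows "\<forall>n m. 1 \<le> n \<longrightarrow> 1 \<le> m \<longrightarrow> (m = n \<or> (1 \<le> k \<and> m \<le> n + k)) \<longrightarrow>
    (\<forall>T1 T2. 0 < T1 \<longrightarrow> T1 \<le> T2 \<longrightarrow>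
      (\<exists>\<epsilon>>0. \<forall>t. T1 \<le> t \<longrightarrow> t \<le> T2 \<longrightarrow> ennreal \<epsilon> \<le> Mit \<beta> \<theta> \<gamma> k t n m))"
proof (induction k)
  case 0
  show ?case
  proof (intro allI impI)
    fix n m :: nat and T1 T2 :: real
    assume h: "1 \<le> n" "1 \<le> m" "m = n \<or> (1 \<le> (0::nat) \<and> m \<le> n + 0)" "0 < T1" "T1 \<le> T2"
    then have mn: "m = n" by simp
    define a where "a = Lker \<beta> \<theta> \<gamma> n n"
    show "\<exists>\<epsilon>>0. \<forall>t. T1 \<le> t \<longrightarrow> t \<le> T2 \<longrightarrow> ennreal \<epsilon> \<le> Mit \<beta> \<theta> \<gamma> 0 t n m"
    proof (intro exI[of _ "exp (- \<bar>a\<bar> * T2)"] conjI allI impI)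
      fix t assume "T1 \<le> t" "t \<le> T2"
      then show "ennreal (exp (- \<bar>a\<bar> * T2)) \<le> Mit \<beta> \<theta> \<gamma> 0 t n m"
        using exp_lb[of t T2 a] h mn unfolding a_def by (auto intro!: ennreal_leI)
    qed simp
  qed
next
  case (Suc k)
  show ?case
  proof (intro allI impI)
    fix n m :: nat and T1 T2 :: real
    assume h: "1 \<le> n" "1 \<le> m" "m = n \<or> (1 \<le> Suc k \<and> m \<le> n + Suc k)" "0 < T1" "T1 \<le> T2"
    define a where "a = Lker \<beta> \<theta> \<gamma> n n"
    define I where "I t = (\<integral>\<^sup>+ s\<in>{0..t}. ennreal (exp (Lker \<beta> \<theta> \<gamma> n n * s))
          * (\<Sum>l\<in>{1..n+1}-{n}. ennreal (Lker \<beta> \<theta> \<gamma> n l) * Mit \<beta> \<theta> \<gamma> k (t - s) l m) \<partial>lborel)" for t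
    have Mi: "Mit \<beta> \<theta> \<gamma> (Suc k) t n m =
       (if n = m then ennreal (exp (a * t)) else 0) + I t" for t
      unfolding I_def a_def by simp
    show "\<exists>\<epsilon>>0. \<forall>t. T1 \<le> t \<longrightarrow> t \<le> T2 \<longrightarrow> ennreal \<epsilon> \<le> Mit \<beta> \<theta> \<gamma> (Suc k) t n m"
    proof (cases "m = n")
      case True
      show ?thesis
      proof (intro exI[of _ "exp (- \<bar>a\<bar> * T2)"] conjI allI impI)
        fix t assume "T1 \<le> t" "t \<le> T2"
        then have "ennreal (exp (- \<bar>a\<bar> * T2)) \<le> ennreal (exp (a * t))"
          using exp_lb[of t T2 a] h by (auto intro!: ennreal_leI)
        also have "\<dots> \<le> Mit \<beta> \<theta> \<gamma> (Suc k) t n m" unfolding Mi using True by simp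
        finally show "ennreal (exp (- \<bar>a\<bar> * T2)) \<le> Mit \<beta> \<theta> \<gamma> (Suc k) t n m" .
      qed simp
    next
      case False
      define l where "l = (if m < n then m else n + 1)"
      have l: "l \<in> {1..n+1} - {n}" using h False unfolding l_def by auto
      have lm: "1 \<le> l" "m = l \<or> (1 \<le> k \<and> m \<le> l + k)" using h False unfolding l_def by auto
      obtain \<epsilon>1 where e1: "\<epsilon>1 > 0" "\<And>t. T1/2 \<le> t \<Longrightarrow> t \<le> T2 \<Longrightarrow> ennreal \<epsilon>1 \<le> Mit \<beta> \<theta> \<gamma> k t l m"
        using Suc.IH[rule_format, OF lm(1) h(2) lm(2), of "T1/2" T2] h by auto
      define L where "L = Lker \<beta> \<theta> \<gamma> n l"
      have L: "L > 0" unfolding L_def using Lker_pos[OF assms h(1) l] .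
      define e0 where "e0 = exp (- \<bar>a\<bar> * T2)"
      have e0: "e0 > 0" unfolding e0_def by simp
      define c where "c = e0 * L * \<epsilon>1"
      have c: "c > 0" unfolding c_def using e0 L e1 by simp
      show ?thesis
      proof (intro exI[of _ "c * (T1/2)"] conjI allI impI)
        show "0 < c * (T1/2)" using c h by simp
        fix t assume t: "T1 \<le> t" "t \<le> T2"
        have pt: "ennreal c * indicator {0..T1/2} s \<le>
           ennreal (exp (Lker \<beta> \<theta> \<gamma> n n * s))
          * (\<Sum>l\<in>{1..n+1}-{n}. ennreal (Lker \<beta> \<theta> \<gamma> n l) * Mit \<beta> \<theta> \<gamma> k (t - s) l m) * indicator {0..t} s" for s
        proof (cases "s \<in> {0..T1/2}")
          case False then show ?thesis by simp
        next
          case True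
          then have s: "0 \<le> s" "s \<le> T1/2" by auto
          have st: "s \<in> {0..t}" using s t h by auto
          have "ennreal c = ennreal e0 * (ennreal L * ennreal \<epsilon>1)"
            unfolding c_def using e0 L e1 by (simp add: ennreal_mult mult.assoc)
          also have "\<dots> \<le> ennreal (exp (Lker \<beta> \<theta> \<gamma> n n * s))
             * (ennreal L * Mit \<beta> \<theta> \<gamma> k (t - s) l m)"
          proof (rule mult_mono)
            show "ennreal e0 \<le> ennreal (exp (Lker \<beta> \<theta> \<gamma> n n * s))"
              unfolding e0_def a_def using exp_lb[of s T2 a] s t h a_def by (auto intro!: ennreal_leI)
            show "ennreal L * ennreal \<epsilon>1 \<le> ennreal L * Mit \<beta> \<theta> \<gamma> k (t - s) l m"
              using e1(2)[of "t - s"] s t h by (intro mult_left_mono) auto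
          qed auto
          also have "\<dots> \<le> ennreal (exp (Lker \<beta> \<theta> \<gamma> n n * s))
          * (\<Sum>l\<in>{1..n+1}-{n}. ennreal (Lker \<beta> \<theta> \<gamma> n l) * Mit \<beta> \<theta> \<gamma> k (t - s) l m)"
            unfolding L_def by (intro mult_left_mono member_le_sum l) auto
          finally show ?thesis using True st by simp
        qed
        have "ennreal (c * (T1/2)) = (\<integral>\<^sup>+ s. ennreal c * indicator {0..T1/2} s \<partial>lborel)"
          using c h by (simp add: nn_integral_cmult_indicator ennreal_mult[symmetric] mult.assoc)
        also have "\<dots> \<le> I t" unfolding I_def
          by (intro nn_integral_mono) (use pt in auto)
        also have "\<dots> \<le> Mit \<beta> \<theta> \<gamma> (Suc k) t n m" unfolding Mi by simp
        finally show "ennreal (c * (T1/2)) \<le> Mit \<beta> \<theta> \<gamma> (Suc k) t n m" .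
      qed
    qed
  qed
qed

lemma Mt_pos:
  assumes "\<beta> > 0" "\<gamma> > 0" "1 \<le> x" "1 \<le> y" "t > 0"
  shows "Mt \<beta> \<theta> \<gamma> t x y > 0"
proof -
  obtain \<epsilon> where e: "\<epsilon> > 0" "ennreal \<epsilon> \<le> Mit \<beta> \<theta> \<gamma> (x+y) t x y"
    using Mit_pos[OF assms(1,2), of "x+y" \<theta>, rule_format, of x y t t] assms by auto
  have "Mit \<beta> \<theta> \<gamma> (x+y) t x y \<le> Mt \<beta> \<theta> \<gamma> t x y"
    unfolding Mt_def by (rule SUP_upper) simp
  then show ?thesis using e by (metis not_le order_le_less_trans ennreal_less_zero_iff)
qed

lemma Lpsi_bounded:
  fixes \<psi> :: "nat \<Rightarrow> real" and K :: nat
  assumes g0: "\<gamma> \<ge> 0" and K1: "1 \<le> K" and tail: "\<forall>j>K. \<psi> j = A"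
    and gb: "\<forall>j. \<bar>\<psi> j - A\<bar> \<le> 1"
    and canc: "\<gamma>*A - \<theta>*A + \<gamma>*(\<Sum>j=1..K. (\<psi> j - A) / (real j*(real j+1))) = 0"
  shows "\<exists>M. \<forall>n. \<bar>genL \<beta> \<theta> \<gamma> \<psi> n\<bar> \<le> M"
proof -
  define w where "w j = 1 / (real j * (real j + 1))" for j :: nat
  define g where "g j = \<psi> j - A" for j
  define D where "D = (\<Sum>j=1..K. g j * w j)"
  have D: "\<gamma>*A - \<theta>*A + \<gamma>*D = 0" using canc unfolding D_def g_def w_def by simp
  have main: "\<bar>genL \<beta> \<theta> \<gamma> \<psi> n\<bar> \<le> \<gamma>*\<bar>A\<bar> + \<gamma>*real K" if n: "n > K" for n
  proof -
    have n1: "1 \<le> n" using n K1 by simp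
    have pn: "\<psi> n = A" "\<psi> (n+1) = A" using tail n by auto
    define E where "E = (\<Sum>j=1..n-1. g (n-j) * w j)"
    have h1: "(\<Sum>j=1..n-1. \<gamma> * real n / (real j * (real j + 1)) * (\<psi> j + \<psi> (n-j) - \<psi> n))
        = (\<Sum>j=1..n-1. \<gamma> * real n * (A * w j + g j * w j + g (n-j) * w j))"
      by (intro sum.cong refl) (simp only: pn w_def g_def a1)
    also have "\<dots> = \<gamma> * real n * (A * (\<Sum>j=1..n-1. w j) + (\<Sum>j=1..n-1. g j * w j) + E)"
      unfolding E_def by (simp only: sum_distrib_left sum.distrib distrib_left)
    finally have h1': "(\<Sum>j=1..n-1. \<gamma> * real n / (real j * (real j + 1)) * (\<psi> j + \<psi> (n-j) - \<psi> n))
        = \<gamma> * real n * (A * (\<Sum>j=1..n-1. w j) + (\<Sum>j=1..n-1. g j * w j) + E)" .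
    have h2: "(\<Sum>j=1..n-1. w j) = 1 - 1 / real n"
      unfolding w_def using tele[of 1 "n-1"] n1 by (simp add: of_nat_diff)
    have h3: "(\<Sum>j=1..n-1. g j * w j) = D"
      unfolding D_def by (rule sum.mono_neutral_right) (use n tail in \<open>auto simp: g_def\<close>)
    have h4a: "E = (\<Sum>j=n-K..n-1. g (n-j) * w j)"
      unfolding E_def by (rule sum.mono_neutral_right) (use n tail in \<open>auto simp: g_def\<close>)
    have "\<bar>E\<bar> \<le> (\<Sum>j=n-K..n-1. \<bar>g (n-j) * w j\<bar>)" unfolding h4a by (rule sum_abs)
    also have "\<dots> \<le> (\<Sum>j=n-K..n-1. w j)"
    proof (rule sum_mono)
      fix j assume "j \<in> {n-K..n-1}"
      have "w j \<ge> 0" unfolding w_def by simp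
      then show "\<bar>g (n-j) * w j\<bar> \<le> w j" using gb unfolding g_def
        by (simp add: abs_mult mult_left_le_one_le)
    qed
    also have "\<dots> = 1 / real (n-K) - 1 / real n"
      unfolding w_def using tele[of "n-K" "n-1"] n n1 by (simp add: of_nat_diff)
    finally have Eb: "\<bar>E\<bar> \<le> 1 / real (n-K) - 1 / real n" .
    have "real n * (1 / real (n-K) - 1 / real n) \<le> real K"
    proof -
      define m where "m = n - K"
      have m: "real m \<ge> 1" "real n = real m + real K" using n unfolding m_def by auto
      have rn: "real n > 0" using n by simp
      have "real n * (1 / real (n-K) - 1 / real n) = real n / real m - 1"
        using rn unfolding m_def[symmetric] by (simp add: right_diff_distrib)
      also have "\<dots> = (real n - real m) / real m" using m(1) by (simp add: diff_divide_distrib)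
      also have "\<dots> = real K / real m" using m by simp
      finally have "real n * (1 / real (n-K) - 1 / real n) = real K / real m" .
      also have "\<dots> \<le> real K / 1" using m(1) by (intro divide_left_mono) auto
      finally show ?thesis by simp
    qed
    then have nE: "real n * \<bar>E\<bar> \<le> real K"
      using Eb by (meson mult_left_mono of_nat_0_le_iff order.trans)
    have gL: "genL \<beta> \<theta> \<gamma> \<psi> n = - \<gamma> * A + \<gamma> * real n * E"
    proof -
      have "genL \<beta> \<theta> \<gamma> \<psi> n = - \<theta> * real n * A + \<gamma> * real n * (A * (1 - 1 / real n) + D + E)"
        unfolding genL_def h1' h2 h3 using pn by simp
      also have "\<dots> = - \<gamma> * A + \<gamma> * real n * E"
        using n1 D by (intro gL_alg) auto
      finally show ?thesis .
    qed
    have "\<bar>genL \<beta> \<theta> \<gamma> \<psi> n\<bar> \<le> \<gamma> * \<bar>A\<bar> + \<gamma> * (real n * \<bar>E\<bar>)"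
      unfolding gL using g0 by (intro abs_aux) auto
    also have "\<dots> \<le> \<gamma> * \<bar>A\<bar> + \<gamma> * real K" using nE g0 by (simp add: mult_left_mono)
    finally show ?thesis .
  qed
  have "eventually (\<lambda>n. \<bar>genL \<beta> \<theta> \<gamma> \<psi> n\<bar> \<le> \<gamma>*\<bar>A\<bar> + \<gamma>*real K) sequentially"
    using eventually_gt_at_top[of K] by (rule eventually_mono) (rule main)
  then show ?thesis by (rule ev_bounded)
qed

lemma psi_exists:
  assumes th: "\<theta> > 0" and ga: "\<gamma> > 0"
  shows "\<exists>\<psi> c M. c > 0 \<and> (\<forall>n\<ge>1. c \<le> \<psi> n \<and> \<psi> n \<le> 1) \<and> \<psi> 2 < \<psi> 1
     \<and> (\<forall>n. \<bar>genL \<beta> \<theta> \<gamma> \<psi> n\<bar> \<le> M)"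
proof -
  define K :: nat where "K = max 2 (nat \<lceil>\<gamma>/\<theta>\<rceil>)"
  have K2: "K \<ge> 2" unfolding K_def by simp
  have Kg: "real K \<ge> \<gamma>/\<theta>" unfolding K_def by linarith
  have thK: "\<theta> * real K \<ge> \<gamma>" using Kg th by (simp add: divide_le_eq mult.commute)
  define t where "t = (\<theta> - \<gamma>) * (real K + 1) / (\<gamma> * real K)"
  define s where "s = 1 + t"
  have Kp: "real K > 0" using K2 by simp
  have sK: "\<gamma> * real K * s = \<theta> * (real K + 1) - \<gamma>"
    unfolding s_def t_def using Kp ga by (simp add: field_simps)
  have s0: "s > 0"
  proof -
    have "\<gamma> * real K * s > 0" unfolding sK using thK th by (simp add: distrib_left)
    then show ?thesis using ga Kp by (smt (verit) mult_pos_pos zero_less_mult_iff)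
  qed
  define e where "e = s / 6"
  define A where "A = 1 / (1 + 2 * s)"
  have A0: "A > 0" "A \<le> 1" unfolding A_def using s0 by auto
  have As: "A * s \<le> 1" "A * (s + e) \<le> 1" unfolding A_def e_def using s0 by (auto simp: field_simps)
  define \<psi> where "\<psi> n = A * (if n = 1 then s + e else if n = 2 then s - 3 * e else if n \<le> K then s else 1)" for n :: nat
  define c where "c = A * min (s/2) 1"
  have c0: "c > 0" unfolding c_def using A0 s0 by simp
  have bnd: "c \<le> \<psi> n \<and> \<psi> n \<le> 1" for n
  proof -
    define v where "v = (if n = 1 then s + e else if n = 2 then s - 3 * e else if n \<le> K then s else 1)"
    have v1: "min (s/2) 1 \<le> v" and v2: "v \<le> max (s + e) 1"
      unfolding e_def v_def using s0 by auto
    have "A * min (s/2) 1 \<le> A * v" using v1 A0 by (intro mult_left_mono) auto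
    moreover have "A * v \<le> A * max (s + e) 1" using v2 A0 by (intro mult_left_mono) auto
    moreover have "A * max (s + e) 1 \<le> 1" using As A0 by (simp add: max_def)
    ultimately show ?thesis unfolding c_def \<psi>_def v_def[symmetric] by linarith
  qed
  have lt: "\<psi> 2 < \<psi> 1" unfolding \<psi>_def e_def using A0 s0 by simp
  have canc: "\<gamma>*A - \<theta>*A + \<gamma>*(\<Sum>j=1..K. (\<psi> j - A) / (real j*(real j+1))) = 0"
  proof -
    have "(\<Sum>j=1..K. (\<psi> j - A) / (real j*(real j+1))) =
      (\<Sum>j=1..K. A*t * (1 / (real j*(real j+1))) + ((if j = 1 then A*e/2 else 0) - (if j = 2 then A*e/2 else 0)))"
    proof (intro sum.cong refl)
      fix j assume j: "j \<in> {1..K}"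
      show "(\<psi> j - A) / (real j*(real j+1)) = A*t * (1 / (real j*(real j+1))) + ((if j = 1 then A*e/2 else 0) - (if j = 2 then A*e/2 else 0))"
        using j unfolding \<psi>_def s_def by (auto simp: field_simps)
    qed
    also have "\<dots> = A*t * (\<Sum>j=1..K. 1 / (real j*(real j+1)))"
      using K2 by (simp add: sum.distrib sum_subtractf sum_distrib_left)
    also have "\<dots> = A*t * (1 - 1 / (real K + 1))" using tele[of 1 K] K2 by simp
    finally have S: "(\<Sum>j=1..K. (\<psi> j - A) / (real j*(real j+1))) = A*t * (1 - 1 / (real K + 1))" .
    have "\<gamma> * (t * (1 - 1 / (real K + 1))) = \<theta> - \<gamma>"
      unfolding t_def using canc_alg[OF Kp ga, of \<theta>] by simp
    then have "\<gamma> * (A*t * (1 - 1 / (real K + 1))) = A * (\<theta> - \<gamma>)"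
      by (metis mult.assoc mult.left_commute)
    then show ?thesis unfolding S by (simp add: algebra_simps)
  qed
  have tail: "\<forall>j>K. \<psi> j = A" unfolding \<psi>_def using K2 by auto
  have gb: "\<forall>j. \<bar>\<psi> j - A\<bar> \<le> 1" using bnd c0 A0 by (smt (verit))
  obtain M where "\<forall>n. \<bar>genL \<beta> \<theta> \<gamma> \<psi> n\<bar> \<le> M"
    using Lpsi_bounded[of \<gamma> K \<psi> A \<theta> \<beta>] ga K2 tail gb canc by auto
  then show ?thesis using c0 bnd lt by blast
qed

lemma partI:
  fixes \<psi> V :: "nat \<Rightarrow> real"
  assumes c: "c > 0" and bnd: "\<forall>n\<ge>1. c \<le> \<psi> n \<and> \<psi> n \<le> 1"
    and M: "\<forall>n. \<bar>genL \<beta> \<theta> \<gamma> \<psi> n\<bar> \<le> M"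
    and H: "\<forall>\<alpha>>0. eventually (\<lambda>n. genL \<beta> \<theta> \<gamma> V n + \<alpha> * V n \<le> 0) sequentially"
  shows "\<exists>a b \<xi> \<zeta> :: real. a < b \<and> \<zeta> > 0 \<and>
            (\<forall>n\<ge>1. genL \<beta> \<theta> \<gamma> V n \<le> a * V n + \<zeta> * \<psi> n
                   \<and> b * \<psi> n \<le> genL \<beta> \<theta> \<gamma> \<psi> n
                   \<and> genL \<beta> \<theta> \<gamma> \<psi> n \<le> \<xi> * \<psi> n)"
proof -
  have M0: "M \<ge> 0" using M by (meson abs_ge_zero order.trans)
  define \<alpha> where "\<alpha> = 1 + M / c"
  have a0: "\<alpha> > 0" unfolding \<alpha>_def using M0 c by (simp add: add_pos_nonneg)
  obtain Z where Z: "\<forall>n. genL \<beta> \<theta> \<gamma> V n + \<alpha> * V n \<le> Z"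
    using ev_bounded[of "\<lambda>n. genL \<beta> \<theta> \<gamma> V n + \<alpha> * V n" 0] H a0 by blast
  define \<zeta> where "\<zeta> = max 1 (Z / c)"
  have z0: "\<zeta> > 0" unfolding \<zeta>_def by simp
  show ?thesis
  proof (rule exI[of _ "- \<alpha>"], rule exI[of _ "- M / c"], rule exI[of _ "M / c"], rule exI[of _ \<zeta>], intro conjI allI impI)
    show "- \<alpha> < - M / c" unfolding \<alpha>_def by simp
    show "\<zeta> > 0" by (rule z0)
    fix n :: nat assume n: "1 \<le> n"
    have pc: "c \<le> \<psi> n" using bnd n by auto
    have "Z \<le> \<zeta> * c" unfolding \<zeta>_def using c by (simp add: divide_le_eq max_def)
    also have "\<dots> \<le> \<zeta> * \<psi> n" using pc z0 by (simp add: mult_left_mono)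
    finally have "Z \<le> \<zeta> * \<psi> n" .
    then show "genL \<beta> \<theta> \<gamma> V n \<le> - \<alpha> * V n + \<zeta> * \<psi> n" using Z[rule_format, of n] by linarith
    have "M \<le> M / c * \<psi> n"
    proof -
      have "M * c \<le> M * \<psi> n" using pc M0 by (simp add: mult_left_mono)
      then show ?thesis using c by (simp add: divide_le_eq mult.commute)
        (metis mult.commute le_divide_eq times_divide_eq_left)
    qed
    then show "- M / c * \<psi> n \<le> genL \<beta> \<theta> \<gamma> \<psi> n" "genL \<beta> \<theta> \<gamma> \<psi> n \<le> M / c * \<psi> n"
      using M[rule_format, of n] by (auto simp: abs_le_iff)
  qed
qed

lemma mono_from_step:
  fixes V :: "nat \<Rightarrow> real"
  assumes "\<forall>n\<ge>1. V n \<le> V (n+1)" "1 \<le> m" "m \<le> n"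
  shows "V m \<le> V n"
  using assms(3)
proof (induction n rule: dec_induct)
  case base then show ?case by simp
next
  case (step k)
  have "1 \<le> k" using step.hyps assms(2) by simp
  then have "V k \<le> V (k+1)" using assms(1) by simp
  then show ?case using step.IH by simp
qed

lemma classS_upper:
  assumes V: "V \<in> classS" and b: "\<beta> \<ge> 0" and g: "\<gamma> \<ge> 0" and n: "1 \<le> n"
  shows "genL \<beta> \<theta> \<gamma> V n \<le> \<beta> * V n - \<theta> * real n * V n
     + \<gamma> * real n * suminf (\<lambda>j. V (j+1) / (real (j+1) * real (j+2)))"
proof -
  have V1: "\<forall>n\<ge>1. 1 \<le> V n" and mono1: "\<forall>n\<ge>1. V n \<le> V (n+1)"
    and rat: "\<forall>n\<ge>1. V (n+1) / real (n+1) \<le> V n / real n"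
    and summ: "summable (\<lambda>j. V (j+1) / (real (j+1) * real (j+2)))"
    using V unfolding classS_def by auto
  define Sv where "Sv = suminf (\<lambda>j. V (j+1) / (real (j+1) * real (j+2)))"
  have rn: "real n > 0" using n by simp
  have "V (n+1) / real (n+1) \<le> V n / real n" using rat n by auto
  then have "real n * V (n+1) \<le> real (n+1) * V n" using rn
    by (simp add: divide_le_eq le_divide_eq field_simps del: of_nat_Suc)
  then have "real n * (V (n+1) - V n) \<le> V n" by (simp add: algebra_simps)
  then have t1: "\<beta> * real n * (V (n+1) - V n) \<le> \<beta> * V n"
    using b by (metis mult.assoc mult_left_mono)
  have t2: "(\<Sum>j=1..n-1. \<gamma> * real n / (real j * (real j + 1)) * (V j + V (n-j) - V n))
      \<le> (\<Sum>j=1..n-1. \<gamma> * real n * (V j / (real j * (real j + 1))))"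
  proof (rule sum_mono)
    fix j assume j: "j \<in> {1..n-1}"
    have "V (n-j) \<le> V n" using mono_from_step[OF mono1, of "n-j" n] j by auto
    moreover have "\<gamma> * real n / (real j * (real j + 1)) \<ge> 0" using g by simp
    ultimately have "\<gamma> * real n / (real j * (real j + 1)) * (V j + V (n-j) - V n)
       \<le> \<gamma> * real n / (real j * (real j + 1)) * V j"
      by (intro mult_left_mono) auto
    then show "\<gamma> * real n / (real j * (real j + 1)) * (V j + V (n-j) - V n)
       \<le> \<gamma> * real n * (V j / (real j * (real j + 1)))" by simp
  qed
  have "(\<Sum>j=1..n-1. V j / (real j * (real j + 1))) = (\<Sum>k<n-1. V (Suc k) / (real (Suc k) * (real (Suc k) + 1)))"
    using sum.atLeast1_atMost_eq[of "\<lambda>j. V j / (real j * (real j + 1))" "n-1"] by simp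
  also have "\<dots> = (\<Sum>k<n-1. V (k+1) / (real (k+1) * real (k+2)))"
    by (intro sum.cong refl) (simp add: add.commute)
  also have "\<dots> \<le> Sv" unfolding Sv_def
  proof (rule sum_le_suminf[OF summ])
    fix k :: nat
    have "V (k+1) \<ge> 1" using V1 by simp
    then have "V (k+1) \<ge> 0" by linarith
    then show "0 \<le> V (k+1) / (real (k+1) * real (k+2))" by (intro divide_nonneg_pos) auto
  qed simp
  finally have t3: "(\<Sum>j=1..n-1. V j / (real j * (real j + 1))) \<le> Sv" .
  have "(\<Sum>j=1..n-1. \<gamma> * real n * (V j / (real j * (real j + 1)))) = \<gamma> * real n * (\<Sum>j=1..n-1. V j / (real j * (real j + 1)))"
    by (simp add: sum_distrib_left)
  also have "\<dots> \<le> \<gamma> * real n * Sv" using t3 g by (intro mult_left_mono) auto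
  finally have t4: "(\<Sum>j=1..n-1. \<gamma> * real n / (real j * (real j + 1)) * (V j + V (n-j) - V n)) \<le> \<gamma> * real n * Sv"
    using t2 by linarith
  show ?thesis unfolding genL_def Sv_def[symmetric] using t1 t4 by linarith
qed

lemma ev_large:
  fixes \<theta> :: real
  assumes "\<theta> > 0"
  shows "eventually (\<lambda>n. 1 \<le> n \<and> C \<le> \<theta> * real n) sequentially"
proof -
  have "eventually (\<lambda>n. max 1 (nat \<lceil>C / \<theta>\<rceil>) \<le> n) sequentially" by (rule eventually_ge_at_top)
  then show ?thesis
  proof (rule eventually_mono)
    fix n assume n: "max 1 (nat \<lceil>C / \<theta>\<rceil>) \<le> n"
    then have "C / \<theta> \<le> real n" by linarith
    then have "C \<le> \<theta> * real n" using assms by (simp add: divide_le_eq mult.commute)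
    then show "1 \<le> n \<and> C \<le> \<theta> * real n" using n by simp
  qed
qed

lemma classS_H:
  assumes V: "V \<in> classS" and b: "\<beta> \<ge> 0" and th: "\<theta> > 0" and g: "\<gamma> \<ge> 0"
  shows "\<forall>\<alpha>>0. eventually (\<lambda>n. genL \<beta> \<theta> \<gamma> V n + \<alpha> * V n \<le> 0) sequentially"
proof (intro allI impI)
  fix \<alpha> :: real assume a: "\<alpha> > 0"
  define Sv where "Sv = suminf (\<lambda>j. V (j+1) / (real (j+1) * real (j+2)))"
  have lim: "filterlim V at_top sequentially" and V1: "\<forall>n\<ge>1. 1 \<le> V n" using V unfolding classS_def by auto
  have e1: "eventually (\<lambda>n. 2 * \<gamma> * Sv / \<theta> \<le> V n) sequentially"
    using lim unfolding filterlim_at_top by blast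
  have e2: "eventually (\<lambda>n. 1 \<le> n \<and> 2 * (\<beta> + \<alpha>) \<le> \<theta> * real n) sequentially"
    by (rule ev_large[OF th])
  show "eventually (\<lambda>n. genL \<beta> \<theta> \<gamma> V n + \<alpha> * V n \<le> 0) sequentially"
    using e1 e2
  proof eventually_elim
    case (elim n)
    then have n: "1 \<le> n" and big: "2 * (\<beta> + \<alpha>) \<le> \<theta> * real n" and Vb: "2 * \<gamma> * Sv / \<theta> \<le> V n" by auto
    have Vn: "V n \<ge> 0" using V1 n by (meson order.trans zero_le_one)
    have u: "genL \<beta> \<theta> \<gamma> V n \<le> \<beta> * V n - \<theta> * real n * V n + \<gamma> * real n * Sv"
      unfolding Sv_def by (rule classS_upper[OF V b g n])
    have "(\<beta> + \<alpha> - \<theta> * real n) * V n \<le> (- (\<theta> * real n / 2)) * V n"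
      using big Vn by (intro mult_right_mono) auto
    also have "\<dots> \<le> (- (\<theta> * real n / 2)) * (2 * \<gamma> * Sv / \<theta>)"
      using Vb th by (intro mult_left_mono_neg) auto
    also have "\<dots> = - (\<gamma> * real n * Sv)" using th by (simp add: field_simps)
    finally have "(\<beta> + \<alpha> - \<theta> * real n) * V n \<le> - (\<gamma> * real n * Sv)" .
    then show ?case using u by (simp add: algebra_simps)
  qed
qed

lemma powr_step:
  fixes p :: real
  assumes p: "p \<ge> 1" and n: "1 \<le> n"
  shows "real n * (real (n+1) powr p - real n powr p) \<le> p * 2 powr p * real n powr p"
proof -
  have rn: "real n > 0" using n by simp
  have d: "((\<lambda>x. x powr p) has_real_derivative p * x powr (p - 1)) (at x)"
    if "real n \<le> x" "x \<le> real n + 1" for x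
    using rn that by (intro has_real_derivative_powr) auto
  have "\<exists>z>real n. z < real n + 1 \<and> (real n + 1) powr p - real n powr p = (real n + 1 - real n) * (p * z powr (p - 1))"
    by (rule MVT2[of "real n" "real n + 1" "\<lambda>x. x powr p" "\<lambda>x. p * x powr (p - 1)"]) (use d in auto)
  then obtain z where z: "real n < z" "z < real n + 1"
    and eq: "(real n + 1) powr p - real n powr p = (real n + 1 - real n) * (p * z powr (p - 1))"
    by blast
  have "z powr (p - 1) \<le> (real n + 1) powr (p - 1)" using z p rn by (intro powr_mono2) auto
  then have "real n * z powr (p - 1) \<le> (real n + 1) * (real n + 1) powr (p - 1)"
    using rn by (intro mult_mono) auto
  also have "\<dots> = (real n + 1) powr p"
    using powr_add[of "real n + 1" 1 "p - 1"] rn by simp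
  also have "\<dots> \<le> (2 * real n) powr p" using rn n p by (intro powr_mono2) auto
  also have "\<dots> = 2 powr p * real n powr p" using rn by (simp add: powr_mult)
  finally have k: "real n * z powr (p - 1) \<le> 2 powr p * real n powr p" .
  have "real n * (real (n+1) powr p - real n powr p) = p * (real n * z powr (p - 1))"
    using eq by (simp add: algebra_simps)
  also have "\<dots> \<le> p * (2 powr p * real n powr p)" using k p by (intro mult_left_mono) auto
  finally show ?thesis by (simp add: mult.assoc)
qed

lemma powr_H:
  fixes p :: real
  assumes p: "p \<ge> 1" and b: "\<beta> \<ge> 0" and th: "\<theta> > 0" and g: "\<gamma> \<ge> 0"
  shows "\<forall>\<alpha>>0. eventually (\<lambda>n. genL \<beta> \<theta> \<gamma> (\<lambda>n. real n powr p) n + \<alpha> * real n powr p \<le> 0) sequentially"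
proof (intro allI impI)
  fix \<alpha> :: real assume a: "\<alpha> > 0"
  show "eventually (\<lambda>n. genL \<beta> \<theta> \<gamma> (\<lambda>n. real n powr p) n + \<alpha> * real n powr p \<le> 0) sequentially"
    using ev_large[OF th, of "\<beta> * p * 2 powr p + \<alpha>"]
  proof (rule eventually_mono)
    fix n :: nat assume h: "1 \<le> n \<and> \<beta> * p * 2 powr p + \<alpha> \<le> \<theta> * real n"
    then have n: "1 \<le> n" and big: "\<beta> * p * 2 powr p + \<alpha> \<le> \<theta> * real n" by auto
    have t1: "\<beta> * real n * (real (n+1) powr p - real n powr p) \<le> \<beta> * (p * 2 powr p * real n powr p)"
      using powr_step[OF p n] b by (simp add: mult.assoc mult_left_mono)
    have t2: "(\<Sum>j=1..n-1. \<gamma> * real n / (real j * (real j + 1)) * (real j powr p + real (n-j) powr p - real n powr p)) \<le> 0"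
    proof (rule sum_nonpos)
      fix j assume j: "j \<in> {1..n-1}"
      have "real j powr p + real (n-j) powr p \<le> (real j + real (n-j)) powr p"
        using p by (intro superadd) auto
      also have "real j + real (n-j) = real n" using j by auto
      finally have "real j powr p + real (n-j) powr p - real n powr p \<le> 0" by simp
      moreover have "\<gamma> * real n / (real j * (real j + 1)) \<ge> 0" using g by simp
      ultimately show "\<gamma> * real n / (real j * (real j + 1)) * (real j powr p + real (n-j) powr p - real n powr p) \<le> 0"
        by (metis mult_nonneg_nonpos)
    qed
    have gl: "genL \<beta> \<theta> \<gamma> (\<lambda>n. real n powr p) n \<le> \<beta> * (p * 2 powr p * real n powr p) - \<theta> * real n * real n powr p"
      unfolding genL_def using t1 t2 by simp
    have "(\<beta> * p * 2 powr p + \<alpha> - \<theta> * real n) * real n powr p \<le> 0"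
      using big by (intro mult_nonpos_nonneg) auto
    then show "genL \<beta> \<theta> \<gamma> (\<lambda>n. real n powr p) n + \<alpha> * real n powr p \<le> 0"
      using gl by (simp add: algebra_simps)
  qed
qed

lemma partII:
  fixes \<psi> V :: "nat \<Rightarrow> real"
  assumes b: "\<beta> > 0" and g: "\<gamma> > 0" and c: "c > 0" and bnd: "\<forall>n\<ge>1. c \<le> \<psi> n \<and> \<psi> n \<le> 1"
    and lim: "filterlim V at_top sequentially" and V1: "V 1 > 0"
  shows "\<exists>R0. \<forall>R\<ge>R0.
            {x. 1 \<le> x \<and> \<psi> x \<ge> V x / R} \<noteq> {}
          \<and> finite {x. 1 \<le> x \<and> \<psi> x \<ge> V x / R}
          \<and> (\<forall>x\<in>{x. 1 \<le> x \<and> \<psi> x \<ge> V x / R}. \<forall>y\<in>{x. 1 \<le> x \<and> \<psi> x \<ge> V x / R}.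
               \<forall>t0>0. Mt \<beta> \<theta> \<gamma> t0 x y > 0)"
proof (intro exI[of _ "max 1 (V 1 / c)"] allI impI conjI)
  fix R :: real assume R: "max 1 (V 1 / c) \<le> R"
  then have R0: "R > 0" and R1: "V 1 / c \<le> R" by auto
  have "V 1 \<le> R * c" using R1 c by (simp add: divide_le_eq)
  then have "V 1 / R \<le> c" using R0 by (simp add: divide_le_eq mult.commute)
  also have "c \<le> \<psi> 1" using bnd by auto
  finally have "1 \<in> {x. 1 \<le> x \<and> \<psi> x \<ge> V x / R}" by simp
  then show "{x. 1 \<le> x \<and> \<psi> x \<ge> V x / R} \<noteq> {}" by blast
  obtain N where N: "\<And>n. n \<ge> N \<Longrightarrow> R + 1 \<le> V n"
    using lim unfolding filterlim_at_top eventually_sequentially by blast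
  have "{x. 1 \<le> x \<and> \<psi> x \<ge> V x / R} \<subseteq> {..<N}"
  proof
    fix x assume x: "x \<in> {x. 1 \<le> x \<and> \<psi> x \<ge> V x / R}"
    show "x \<in> {..<N}"
    proof (rule ccontr)
      assume "x \<notin> {..<N}"
      then have "R + 1 \<le> V x" using N by simp
      moreover have "V x / R \<le> \<psi> x" "\<psi> x \<le> 1" using x bnd by auto
      then have "V x / R \<le> 1" by linarith
      then have "V x \<le> R" using R0 by (simp add: divide_le_eq)
      ultimately show False by simp
    qed
  qed
  then show "finite {x. 1 \<le> x \<and> \<psi> x \<ge> V x / R}" by (rule finite_subset) simp
  show "\<forall>x\<in>{x. 1 \<le> x \<and> \<psi> x \<ge> V x / R}. \<forall>y\<in>{x. 1 \<le> x \<and> \<psi> x \<ge> V x / R}.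
               \<forall>t0>0. Mt \<beta> \<theta> \<gamma> t0 x y > 0"
  proof (intro ballI allI impI)
    fix x y t0 assume "x \<in> {x. 1 \<le> x \<and> \<psi> x \<ge> V x / R}" "y \<in> {x. 1 \<le> x \<and> \<psi> x \<ge> V x / R}" "(t0::real) > 0"
    then show "Mt \<beta> \<theta> \<gamma> t0 x y > 0" by (intro Mt_pos[OF b g]) auto
  qed
qed

theorem lemma4p2:
  fixes \<beta> \<theta> \<gamma> :: real
  assumes "\<beta> > 0" "\<theta> > 0" "\<gamma> > 0"
  shows "\<exists>\<psi> :: nat \<Rightarrow> real.
    (\<forall>n\<ge>1. 0 < \<psi> n)
    \<and> (\<exists>c>0. \<forall>n\<ge>1. c \<le> \<psi> n)
    \<and> (\<forall>n\<ge>1. \<psi> n \<le> 1)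
    \<and> (\<exists>m\<ge>1. \<exists>n\<ge>1. \<psi> m < \<psi> n)
    \<and> (\<forall>V \<in> classS \<union> {(\<lambda>n. real n powr p) | p::real. p \<ge> 1}.
         (\<exists>a b \<xi> \<zeta> :: real. a < b \<and> \<zeta> > 0 \<and>
            (\<forall>n\<ge>1. genL \<beta> \<theta> \<gamma> V n \<le> a * V n + \<zeta> * \<psi> n
                   \<and> b * \<psi> n \<le> genL \<beta> \<theta> \<gamma> \<psi> n
                   \<and> genL \<beta> \<theta> \<gamma> \<psi> n \<le> \<xi> * \<psi> n))
       \<and> (\<exists>R0. \<forall>R\<ge>R0.
            {x. 1 \<le> x \<and> \<psi> x \<ge> V x / R} \<noteq> {}
          \<and> finite {x. 1 \<le> x \<and> \<psi> x \<ge> V x / R}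
          \<and> (\<forall>x\<in>{x. 1 \<le> x \<and> \<psi> x \<ge> V x / R}. \<forall>y\<in>{x. 1 \<le> x \<and> \<psi> x \<ge> V x / R}.
               \<forall>t0>0. Mt \<beta> \<theta> \<gamma> t0 x y > 0)))"
proof -
  obtain \<psi> c M where c: "c > 0" and bnd: "\<forall>n\<ge>1. c \<le> \<psi> n \<and> \<psi> n \<le> 1"
    and lt: "\<psi> 2 < \<psi> 1" and M: "\<forall>n. \<bar>genL \<beta> \<theta> \<gamma> \<psi> n\<bar> \<le> M"
    using psi_exists[OF assms(2,3), of \<beta>] by blast
  show ?thesis
  proof (rule exI[of _ \<psi>], intro conjI ballI)
    show "\<forall>n\<ge>1. 0 < \<psi> n"
    proof (intro allI impI)
      fix n :: nat assume "1 \<le> n"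
      then have "c \<le> \<psi> n" using bnd by simp
      then show "0 < \<psi> n" using c by linarith
    qed
    show "\<exists>c>0. \<forall>n\<ge>1. c \<le> \<psi> n" using bnd c by blast
    show "\<forall>n\<ge>1. \<psi> n \<le> 1" using bnd by blast
    show "\<exists>m\<ge>1. \<exists>n\<ge>1. \<psi> m < \<psi> n" using lt by (intro exI[of _ 2] exI[of _ 1]) auto
  next
    fix V assume V: "V \<in> classS \<union> {(\<lambda>n. real n powr p) | p::real. p \<ge> 1}"
    have H: "\<forall>\<alpha>>0. eventually (\<lambda>n. genL \<beta> \<theta> \<gamma> V n + \<alpha> * V n \<le> 0) sequentially"
      and lim: "filterlim V at_top sequentially" and V1: "V 1 > 0"
    proof -
      consider "V \<in> classS" | p where "p \<ge> 1" "V = (\<lambda>n. real n powr p)" using V by blast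
      then have "(\<forall>\<alpha>>0. eventually (\<lambda>n. genL \<beta> \<theta> \<gamma> V n + \<alpha> * V n \<le> 0) sequentially)
        \<and> filterlim V at_top sequentially \<and> V 1 > 0"
      proof cases
        case 1
        have "V 1 \<ge> 1" using 1 unfolding classS_def by simp
        moreover have "filterlim V at_top sequentially" using 1 unfolding classS_def by simp
        moreover have "\<forall>\<alpha>>0. eventually (\<lambda>n. genL \<beta> \<theta> \<gamma> V n + \<alpha> * V n \<le> 0) sequentially"
          using assms by (intro classS_H[OF 1]) auto
        ultimately show ?thesis by simp
      next
        case 2
        have "filterlim (\<lambda>n. real n powr p) at_top sequentially"
        proof (rule filterlim_at_top_mono[OF filterlim_real_sequentially])
          show "eventually (\<lambda>n. real n \<le> real n powr p) sequentially"
            using eventually_ge_at_top[of "1::nat"]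
          proof (rule eventually_mono)
            fix n :: nat assume "1 \<le> n"
            then have "real n powr 1 \<le> real n powr p" using 2 by (intro powr_mono) auto
            then show "real n \<le> real n powr p" using \<open>1 \<le> n\<close> by simp
          qed
        qed
        moreover have "\<forall>\<alpha>>0. eventually (\<lambda>n. genL \<beta> \<theta> \<gamma> (\<lambda>n. real n powr p) n + \<alpha> * real n powr p \<le> 0) sequentially"
          using assms by (intro powr_H[OF 2(1)]) auto
        ultimately show ?thesis using 2 by simp
      qed
      then show "\<forall>\<alpha>>0. eventually (\<lambda>n. genL \<beta> \<theta> \<gamma> V n + \<alpha> * V n \<le> 0) sequentially"
        "filterlim V at_top sequentially" "V 1 > 0" by auto
    qed
    show "\<exists>a b \<xi> \<zeta> :: real. a < b \<and> \<zeta> > 0 \<and>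
            (\<forall>n\<ge>1. genL \<beta> \<theta> \<gamma> V n \<le> a * V n + \<zeta> * \<psi> n
                   \<and> b * \<psi> n \<le> genL \<beta> \<theta> \<gamma> \<psi> n
                   \<and> genL \<beta> \<theta> \<gamma> \<psi> n \<le> \<xi> * \<psi> n)"
      by (rule partI[OF c bnd M H])
    show "\<exists>R0. \<forall>R\<ge>R0.
            {x. 1 \<le> x \<and> \<psi> x \<ge> V x / R} \<noteq> {}
          \<and> finite {x. 1 \<le> x \<and> \<psi> x \<ge> V x / R}
          \<and> (\<forall>x\<in>{x. 1 \<le> x \<and> \<psi> x \<ge> V x / R}. \<forall>y\<in>{x. 1 \<le> x \<and> \<psi> x \<ge> V x / R}.
               \<forall>t0>0. Mt \<beta> \<theta> \<gamma> t0 x y > 0)"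
      by (rule partII[OF assms(1,3) c bnd lim V1])
  qed
qed

end
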